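(* Let $(A,\circ,\cap)$ be a right normal band with intersection. For all $a,b\in A$, $a=a\circ b$ if and only if $a=a\cap b$.
   Context: A right normal band with intersection $(A,\circ,\cap)$: $(A,\circ)$ a semigroup with $x\circ x=x$ and $(x\circ y)\circ z=(y\circ x)\circ z$; $(A,\cap)$ a semilattice (associative, commutative, idempotent); $(x\cap y)\circ x=x\cap y$ and $x\circ(y\cap z)=(x\circ y)\cap z$ for all $x,y,z$. (The relation $a=a\circ b$ is the natural order $a\le b$.) *)

theory Defs
  imports Main
begin

definition right_normal_band_with_intersection ::
  "('a \<Rightarrow> 'a \<Rightarrow> 'a) \<Rightarrow> ('a \<Rightarrow> 'a \<Rightarrow> 'a) \<Rightarrow> bool" where
  "right_normal_band_with_intersection cmp meet \<longleftrightarrow>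
     (\<forall>x y z. cmp (cmp x y) z = cmp x (cmp y z)) \<and>
     (\<forall>x. cmp x x = x) \<and>
     (\<forall>x y z. cmp (cmp x y) z = cmp (cmp y x) z) \<and>
     (\<forall>x y z. meet (meet x y) z = meet x (meet y z)) \<and>
     (\<forall>x y. meet x y = meet y x) \<and>
     (\<forall>x. meet x x = x) \<and>
     (\<forall>x y. cmp (meet x y) x = meet x y) \<and>
     (\<forall>x y z. cmp x (meet y z) = meet (cmp x y) z)"

end

theory Submission
  imports Defs
begin

theorem proposition3p8:
  fixes cmp :: "'a \<Rightarrow> 'a \<Rightarrow> 'a" and meet :: "'a \<Rightarrow> 'a \<Rightarrow> 'a"
  assumes "right_normal_band_with_intersection cmp meet"
  shows "\<forall>a b. a = cmp a b \<longleftrightarrow> a = meet a b"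
proof (intro allI iffI)
  fix a b
  have idc: "\<And>x. cmp x x = x" and com: "\<And>x y. meet x y = meet y x"
    and idm: "\<And>x. meet x x = x"
    and ab: "\<And>x y. cmp (meet x y) x = meet x y"
    and dist: "\<And>x y z. cmp x (meet y z) = meet (cmp x y) z"
    using assms unfolding right_normal_band_with_intersection_def by blast+
  {
    assume h: "a = cmp a b"
    have "a = meet (cmp a b) a" using h idm by metis
    also have "\<dots> = cmp a (meet b a)" using dist by metis
    also have "\<dots> = cmp a (meet a b)" using com by metis
    also have "\<dots> = meet (cmp a a) b" using dist by metis
    also have "\<dots> = meet a b" using idc by metis
    finally show "a = meet a b" .
  }
  {
    assume h: "a = meet a b"
    have "cmp a b = cmp (meet b a) b" using h com by metis
    also have "\<dots> = meet b a" using ab by metis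
    finally show "a = cmp a b" using h com by metis
  }
qed

end
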